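(* Let $\theta$ be masked attention parameters with $d_{\mathrm{in}}(\theta)=d$ and let $\Gamma_\theta$ be the masked attention map, restricted to $\mathrm{Lip}_C^\sigma(\tilde\Omega)\times\tilde\Omega$. Then: (a) $\Gamma_\theta$ is causal and identifiable; (b) for all $(\mu,x,t)\in\mathrm{Lip}_C^\sigma(\tilde\Omega)\times\tilde\Omega$, $\Gamma_\theta(\mu,x,t)=\bar\Gamma_\theta(\mu_t,x)$; (c) the map $\mathcal{X}_C^\sigma\ni(\nu,x)\mapsto\bar\Gamma_\theta(\nu,x)$ is continuous for the product of the weak$^*$ and Euclidean topologies.
   Context: $\Omega\subset\mathbb{R}^d$ compact, $\tilde\Omega=\Omega\times[0,1]$, $C>0$, $\sigma\in(0,1)$, $\bar\mu$ the time marginal of $\mu$. $\mathrm{Lip}_C^\sigma(\tilde\Omega)$: all $\mu\in\mathcal{P}(\tilde\Omega)$ with $\bar\mu(\{0\})\ge\sigma$ admitting a disintegration $d\mu(x,s)=d\mu(x|s)d\bar\mu(s)$ with $W_2(\mu(\cdot|s),\mu(\cdot|t))\le C|s-t|$. Masked measure: $\mu_t=\frac{1_{[0,t]}}{\bar\mu([0,t])}\cdot\mu$, $t\in[0,1]$ (equal to $\mu(\cdot|0)\otimes\delta_0$ at $t=0$). Causal: $\Lambda(\mu,x,t)=\Lambda(\mu_t,x,t)$ for all $(\mu,x,t)\in\mathrm{Lip}_C^\sigma(\tilde\Omega)\times\tilde\Omega$. Identifiable: for $\mu\in\mathrm{Lip}_C^\sigma(\tilde\Omega)$, $t,t'\in[0,1]$,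 $\mu_t=\mu_{t'}$ implies $\Lambda(\mu_t,\cdot,t)=\Lambda(\mu_{t'},\cdot,t')$. Masked attention with $\theta=(W^h,K^h,Q^h,V^h)_{h=1}^H$, $K^h,Q^h\in\mathbb{R}^{k\times d_{\mathrm{in}}}$, $V^h\in\mathbb{R}^{d_{\mathrm{head}}\times d_{\mathrm{in}}}$, $W^h\in\mathbb{R}^{d_{\mathrm{in}}\times d_{\mathrm{head}}}$: $$\Gamma_\theta(\mu,x,t)=x+\sum_{h=1}^HW^h\int\frac{\exp(\frac1{\sqrt k}\langle Q^hx,K^hy\rangle)1_{[0,t]}(r)}{\int\exp(\frac1{\sqrt k}\langle Q^hx,K^hz\rangle)1_{[0,t]}(s)\,d\mu(z,s)}V^hy\,d\mu(y,r).$$ Reduced map: $\bar\Lambda(\mu,x)=\Lambda(\mu,x,e(\bar\mu))$ with $e(\bar\mu)=\max\operatorname{supp}(\bar\mu)$. $\mathcal{X}_C^\sigma=\{(\mu_t,x):\mu\in\mathrm{Lip}_C^\sigma(\tilde\Omega),x\in\Omega,t\in[0,1]\}$. *)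

theory Defs
  imports "HOL-Probability.Probability"
begin

type_synonym 'd tmeas = "((real^'d) \<times> real) measure"

definition tmarg :: "'d tmeas \<Rightarrow> real measure" where
  "tmarg \<mu> = distr \<mu> borel snd"

text \<open>Probability measures on \<Omega> x [0,1] (Borel measures on R^d x R concentrated there).\<close>
definition Pmeas :: "(real^'d) set \<Rightarrow> 'd tmeas set" where
  "Pmeas \<Omega> = {\<mu>. prob_space \<mu> \<and> sets \<mu> = sets borel \<and> emeasure \<mu> (\<Omega> \<times> {0..1}) = 1}"

definition couplings :: "(real^'d) measure \<Rightarrow> (real^'d) measure \<Rightarrow> ((real^'d) \<times> (real^'d)) measure set" where
  "couplings \<alpha> \<beta> = {\<pi>. prob_space \<pi> \<and> sets \<pi> = sets borel \<and>
      distr \<pi> borel fst = \<alpha> \<and> distr \<pi> borel snd = \<beta>}"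

definition W2 :: "(real^'d) measure \<Rightarrow> (real^'d) measure \<Rightarrow> real" where
  "W2 \<alpha> \<beta> = sqrt (INF \<pi>\<in>couplings \<alpha> \<beta>. \<integral>z. (norm (fst z - snd z))\<^sup>2 \<partial>\<pi>)"

text \<open>A disintegration of \<mu> w.r.t. its time marginal: a measurable probability kernel
  s \<mapsto> \<kappa> s with values in P(\<Omega>) such that d\<mu>(x,s) = d\<kappa>(s)(x) d\<mu>bar(s).\<close>
definition disintegration :: "(real^'d) set \<Rightarrow> 'd tmeas \<Rightarrow> (real \<Rightarrow> (real^'d) measure) \<Rightarrow> bool" where
  "disintegration \<Omega> \<mu> \<kappa> \<longleftrightarrow>
     \<kappa> \<in> measurable borel (prob_algebra borel) \<and>
     (\<forall>s\<in>{0..1}. emeasure (\<kappa> s) \<Omega> = 1) \<and>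
     (\<forall>A\<in>sets borel. emeasure \<mu> A = (\<integral>\<^sup>+ s. emeasure (\<kappa> s) {x. (x, s) \<in> A} \<partial>tmarg \<mu>))"

definition LipC :: "(real^'d) set \<Rightarrow> real \<Rightarrow> real \<Rightarrow> 'd tmeas set" where
  "LipC \<Omega> C \<sigma> = {\<mu>\<in>Pmeas \<Omega>. measure (tmarg \<mu>) {0} \<ge> \<sigma> \<and>
      (\<exists>\<kappa>. disintegration \<Omega> \<mu> \<kappa> \<and>
          (\<forall>s\<in>{0..1}. \<forall>t\<in>{0..1}. W2 (\<kappa> s) (\<kappa> t) \<le> C * \<bar>s - t\<bar>))}"

definition masked :: "'d tmeas \<Rightarrow> real \<Rightarrow> 'd tmeas" where
  "masked \<mu> t = density \<mu> (\<lambda>z. ennreal (indicator {0..t} (snd z) / measure (tmarg \<mu>) {0..t}))"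

definition causal :: "(real^'d) set \<Rightarrow> real \<Rightarrow> real \<Rightarrow> ('d tmeas \<Rightarrow> real^'d \<Rightarrow> real \<Rightarrow> 'b) \<Rightarrow> bool" where
  "causal \<Omega> C \<sigma> \<Lambda> \<longleftrightarrow>
     (\<forall>\<mu>\<in>LipC \<Omega> C \<sigma>. \<forall>x\<in>\<Omega>. \<forall>t\<in>{0..1}. \<Lambda> \<mu> x t = \<Lambda> (masked \<mu> t) x t)"

definition identifiable :: "(real^'d) set \<Rightarrow> real \<Rightarrow> real \<Rightarrow> ('d tmeas \<Rightarrow> real^'d \<Rightarrow> real \<Rightarrow> 'b) \<Rightarrow> bool" where
  "identifiable \<Omega> C \<sigma> \<Lambda> \<longleftrightarrow>
     (\<forall>\<mu>\<in>LipC \<Omega> C \<sigma>. \<forall>t\<in>{0..1}. \<forall>t'\<in>{0..1}. masked \<mu> t = masked \<mu> t' \<longrightarrow>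
        (\<forall>x\<in>\<Omega>. \<Lambda> (masked \<mu> t) x t = \<Lambda> (masked \<mu> t') x t'))"

definition msupp :: "real measure \<Rightarrow> real set" where
  "msupp \<nu> = {s. \<forall>e>0. emeasure \<nu> (ball s e) > 0}"

definition endtime :: "'d tmeas \<Rightarrow> real" where
  "endtime \<nu> = Sup (msupp (tmarg \<nu>))"

definition reduced :: "('d tmeas \<Rightarrow> real^'d \<Rightarrow> real \<Rightarrow> 'b) \<Rightarrow> 'd tmeas \<Rightarrow> real^'d \<Rightarrow> 'b" where
  "reduced \<Lambda> \<nu> x = \<Lambda> \<nu> x (endtime \<nu>)"

definition Xset :: "(real^'d) set \<Rightarrow> real \<Rightarrow> real \<Rightarrow> ('d tmeas \<times> (real^'d)) set" where
  "Xset \<Omega> C \<sigma> = {(masked \<mu> t, x) | \<mu> x t. \<mu> \<in> LipC \<Omega> C \<sigma> \<and> x \<in> \<Omega> \<and> t \<in> {0..1}}"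

definition weak_star :: "('a::topological_space) measure topology" where
  "weak_star = topology_generated_by
     {{\<mu>. (\<integral>z. f z \<partial>\<mu>) \<in> U} | f U. continuous_on UNIV f \<and> bounded (range f) \<and> open (U::real set)}"

text \<open>Parameters: a list of H heads (W^h, K^h, Q^h, V^h) with
  K^h, Q^h \<in> R^{k x d}, V^h \<in> R^{d_head x d}, W^h \<in> R^{d x d_head}.\<close>
type_synonym ('d, 'k, 'e) attn_params =
  "((real^'e^'d) \<times> (real^'d^'k) \<times> (real^'d^'k) \<times> (real^'d^'e)) list"

definition attn :: "('d, 'k::finite, 'e::finite) attn_params \<Rightarrow> 'd tmeas \<Rightarrow> real^'d \<Rightarrow> real \<Rightarrow> real^'d" where
  "attn \<theta> \<mu> x t = x + (\<Sum>(W, K, Q, V)\<leftarrow>\<theta>.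
      W *v (\<integral>yr. (exp ((1 / sqrt (real CARD('k))) * ((Q *v x) \<bullet> (K *v fst yr))) * indicator {0..t} (snd yr)
               / (\<integral>zs. exp ((1 / sqrt (real CARD('k))) * ((Q *v x) \<bullet> (K *v fst zs))) * indicator {0..t} (snd zs) \<partial>\<mu>))
             *\<^sub>R (V *v fst yr) \<partial>\<mu>))"

end

theory Submission imports Defs begin

definition EK :: "real^'d^'k \<Rightarrow> real^'d^'k \<Rightarrow> real^'d \<Rightarrow> real^'d \<Rightarrow> real" where
  "EK K Q x y = exp ((1 / sqrt (real CARD('k))) * ((Q *v x) \<bullet> (K *v y)))"

lemma cont_mv[continuous_intros]: "continuous_on S f \<Longrightarrow> continuous_on S (\<lambda>x. (A::real^'a^'b) *v f x)"
  using bounded_linear.continuous_on[OF matrix_vector_mul_bounded_linear] by blast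

lemma cont_EK: "continuous_on UNIV (\<lambda>p. EK K Q (fst p) (snd p))"
  unfolding EK_def by (intro continuous_intros)

lemma meas_cont: "sets \<nu> = sets borel \<Longrightarrow> continuous_on UNIV f \<Longrightarrow> f \<in> borel_measurable \<nu>"
  by (metis borel_measurable_continuous_onI measurable_cong_sets)

lemma meas_ind: "sets \<nu> = sets (borel :: ((real^'d) \<times> real) measure) \<Longrightarrow> (\<lambda>z. indicator {0..t} (snd z) :: real) \<in> borel_measurable \<nu>"
proof -
  assume s: "sets \<nu> = sets (borel :: ((real^'d) \<times> real) measure)"
  have "closed (UNIV \<times> {0..t} :: ((real^'d) \<times> real) set)" by (intro closed_Times) auto
  then have "UNIV \<times> {0..t} \<in> sets \<nu>" using s by simp
  then have "(indicator (UNIV \<times> {0..t}) :: _ \<Rightarrow> real) \<in> borel_measurable \<nu>" by simp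
  moreover have "indicator (UNIV \<times> {0..t}) = (\<lambda>z::(real^'d) \<times> real. indicator {0..t} (snd z) :: real)"
    by (auto simp: indicator_def fun_eq_iff)
  ultimately show ?thesis by simp
qed

lemma meas_snd: "sets \<nu> = sets (borel :: ((real^'d) \<times> real) measure) \<Longrightarrow> snd \<in> measurable \<nu> borel"
  by (rule meas_cont) (auto intro!: continuous_intros)

lemma Pmeas_facts:
  assumes "\<mu> \<in> Pmeas \<Omega>"
  shows "prob_space \<mu>" "sets \<mu> = sets borel" "AE z in \<mu>. z \<in> \<Omega> \<times> {0..1}"
proof -
  show p: "prob_space \<mu>" and "sets \<mu> = sets borel" using assms by (auto simp: Pmeas_def)
  have "measure \<mu> (\<Omega> \<times> {0..1}) = 1" using assms by (auto simp: Pmeas_def measure_def)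
  then show "AE z in \<mu>. z \<in> \<Omega> \<times> {0..1}" by (rule prob_space.AE_prob_1[OF p])
qed

lemma tmarg_facts:
  assumes "prob_space \<mu>" "sets \<mu> = sets (borel :: ((real^'d) \<times> real) measure)"
  shows "prob_space (tmarg \<mu>)" "sets (tmarg \<mu>) = sets borel"
  unfolding tmarg_def using prob_space.prob_space_distr[OF assms(1) meas_snd[OF assms(2)]] by auto

lemma masked_facts:
  fixes \<mu> :: "('d::finite) tmeas"
  assumes p: "prob_space \<mu>" and s: "sets \<mu> = sets borel" and ae: "AE z in \<mu>. P z"
    and m: "measure (tmarg \<mu>) {0..t} > 0"
  shows "prob_space (masked \<mu> t)" "sets (masked \<mu> t) = sets borel"
    "AE z in masked \<mu> t. P z \<and> snd z \<in> {0..t}"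
proof -
  define m where "m = measure (tmarg \<mu>) {0..t}"
  have mpos: "m > 0" using m m_def by simp
  have gm: "(\<lambda>z. ennreal (indicator {0..t} (snd z) / m)) \<in> borel_measurable \<mu>"
    using meas_ind[OF s] by (intro measurable_compose[OF _ measurable_ennreal] borel_measurable_divide) auto
  show s2: "sets (masked \<mu> t) = sets borel" using s by (simp add: masked_def)
  have sp: "space \<mu> = UNIV" using s by (metis sets_eq_imp_space_eq space_borel)
  have pre: "snd -` {0..t} \<inter> space \<mu> \<in> sets \<mu>" using meas_snd[OF s] by (simp add: measurable_sets)
  have "emeasure (masked \<mu> t) (space (masked \<mu> t)) = (\<integral>\<^sup>+z. ennreal (indicator {0..t} (snd z) / m) * indicator UNIV z \<partial>\<mu>)"
    unfolding masked_def m_def[symmetric] using gm sp sets.top[of \<mu>] by (subst emeasure_density) auto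
  also have "\<dots> = (\<integral>\<^sup>+z. ennreal (1/m) * indicator (snd -` {0..t} \<inter> space \<mu>) z \<partial>\<mu>)"
    by (intro nn_integral_cong) (auto simp: indicator_def sp)
  also have "\<dots> = ennreal (1/m) * emeasure \<mu> (snd -` {0..t} \<inter> space \<mu>)"
    using pre by (rule nn_integral_cmult_indicator)
  also have "emeasure \<mu> (snd -` {0..t} \<inter> space \<mu>) = emeasure (tmarg \<mu>) {0..t}"
    unfolding tmarg_def using meas_snd[OF s] by (subst emeasure_distr) auto
  also have "\<dots> = ennreal m"
    unfolding m_def using prob_space.finite_measure[OF tmarg_facts(1)[OF p s]] by (rule finite_measure.emeasure_eq_measure)
  also have "ennreal (1/m) * ennreal m = 1" using mpos by (simp add: ennreal_mult[symmetric])
  finally show "prob_space (masked \<mu> t)" by (rule prob_spaceI)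
  have "AE z in \<mu>. 0 < ennreal (indicator {0..t} (snd z) / m) \<longrightarrow> P z \<and> snd z \<in> {0..t}"
    using ae by eventually_elim (auto simp: indicator_def)
  then show "AE z in masked \<mu> t. P z \<and> snd z \<in> {0..t}"
    unfolding masked_def m_def[symmetric] using gm by (subst AE_density) auto
qed

lemma compact_null:
  fixes T :: "real measure"
  assumes K: "compact K" and s: "sets T = sets borel"
    and nb: "\<And>s. s \<in> K \<Longrightarrow> \<exists>r>0. emeasure T (ball s r) = 0"
  shows "AE u in T. u \<notin> K"
proof -
  define C where "C = {p. snd p > 0 \<and> emeasure T (ball (fst p) (snd p)) = 0}"
  have cov: "K \<subseteq> (\<Union>p\<in>C. ball (fst p) (snd p))"
  proof
    fix s assume "s \<in> K"
    then obtain r where r: "r > 0" "emeasure T (ball s r) = 0" using nb by blast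
    then have "(s, r) \<in> C" unfolding C_def by simp
    moreover have "s \<in> ball s r" using r by simp
    ultimately show "s \<in> (\<Union>p\<in>C. ball (fst p) (snd p))" by (intro UN_I) auto
  qed
  obtain F where F: "F \<subseteq> C" "finite F" "K \<subseteq> (\<Union>p\<in>F. ball (fst p) (snd p))"
    by (rule compactE_image[OF K _ cov]) auto
  have "\<And>p. p \<in> F \<Longrightarrow> ball (fst p) (snd p) \<in> null_sets T"
  proof -
    fix p assume "p \<in> F"
    then have "emeasure T (ball (fst p) (snd p)) = 0" using F(1) C_def by blast
    then show "ball (fst p) (snd p) \<in> null_sets T" using s by (intro null_setsI) auto
  qed
  then have "(\<Union>p\<in>F. ball (fst p) (snd p)) \<in> null_sets T"
    using F(2) by (intro null_sets_UN') (auto intro: countable_finite)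
  then have "AE u in T. u \<notin> (\<Union>p\<in>F. ball (fst p) (snd p))" by (rule AE_not_in)
  then show ?thesis by eventually_elim (use F(3) in blast)
qed

lemma endtime_AE:
  fixes \<nu> :: "('d::finite) tmeas"
  assumes p: "prob_space \<nu>" and s: "sets \<nu> = sets borel" and ae: "AE z in \<nu>. snd z \<in> {0..t}"
  shows "AE z in \<nu>. snd z \<in> {0..endtime \<nu>}"
proof -
  define T where "T = tmarg \<nu>"
  have pT: "prob_space T" and sT: "sets T = sets borel" using tmarg_facts[OF p s] T_def by auto
  have aeT: "AE u in T. u \<in> {0..t}"
    unfolding T_def tmarg_def using ae meas_snd[OF s] by (subst AE_distr_iff) auto
  define S where "S = msupp T"
  have notin: "\<exists>r>0. emeasure T (ball s r) = 0" if "s \<notin> S" for s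
    using that unfolding S_def msupp_def by (auto simp: not_less)
  have S_ne: "S \<noteq> {}"
  proof
    assume "S = {}"
    then have "AE u in T. u \<notin> {0..t}" using notin by (intro compact_null[OF _ sT]) auto
    with aeT have "AE u in T. False" by eventually_elim auto
    then show False using prob_space.AE_False[OF pT] by simp
  qed
  have S_le: "s \<le> t" if "s \<in> S" for s
  proof (rule ccontr)
    assume "\<not> s \<le> t"
    have N: "- {0..t} \<in> null_sets T" using aeT sT by (subst AE_iff_null_sets) auto
    have "ball s (s - t) \<subseteq> - {0..t}" using \<open>\<not> s \<le> t\<close> by (auto simp: dist_real_def)
    then have "ball s (s - t) \<in> null_sets T" using N sT by (intro null_sets_subset[OF N]) auto
    then have "emeasure T (ball s (s - t)) = 0" by auto
    moreover have "emeasure T (ball s (s - t)) > 0" using that \<open>\<not> s \<le> t\<close> unfolding S_def msupp_def by auto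
    ultimately show False by simp
  qed
  have bdd: "bdd_above S" unfolding bdd_above_def using S_le by blast
  define e where "e = Sup S"
  have "AE u in T. u \<notin> {e + inverse (real (Suc n)) .. t}" for n
  proof (rule compact_null[OF _ sT])
    fix s assume "s \<in> {e + inverse (real (Suc n))..t}"
    then have h1: "e + inverse (real (Suc n)) \<le> s" by (simp only: atLeastAtMost_iff)
    have h2: "inverse (real (Suc n)) > 0" by simp
    from h1 h2 have "s > e" by linarith
    have "s \<notin> S"
    proof
      assume "s \<in> S"
      then have "s \<le> e" unfolding e_def by (rule cSup_upper[OF _ bdd])
      with \<open>s > e\<close> show False by simp
    qed
    then show "\<exists>r>0. emeasure T (ball s r) = 0" by (rule notin)
  qed auto
  then have "AE u in T. \<forall>n. u \<notin> {e + inverse (real (Suc n)) .. t}" by (subst AE_all_countable) auto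
  with aeT have aeT2: "AE u in T. u \<in> {0..e}"
  proof eventually_elim
    case (elim u)
    show ?case
    proof (rule ccontr)
      assume "u \<notin> {0..e}"
      then have "u - e > 0" using elim by auto
      then obtain n where n: "inverse (real (Suc n)) < u - e" using reals_Archimedean by blast
      then have "u \<in> {e + inverse (real (Suc n))..t}" using elim(1) by auto
      then show False using elim by blast
    qed
  qed
  have "endtime \<nu> = e" unfolding endtime_def e_def S_def T_def ..
  then show ?thesis using aeT2 unfolding T_def tmarg_def using meas_snd[OF s]
    by (subst (asm) AE_distr_iff) auto
qed

definition attn0 :: "('d, 'k::finite, 'e::finite) attn_params \<Rightarrow> ('d::finite) tmeas \<Rightarrow> real^'d \<Rightarrow> real^'d" where
  "attn0 \<theta> \<nu> x = x + (\<Sum>(W, K, Q, V)\<leftarrow>\<theta>.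
      W *v ((1 / (\<integral>z. EK K Q x (fst z) \<partial>\<nu>)) *\<^sub>R (\<integral>z. EK K Q x (fst z) *\<^sub>R (V *v fst z) \<partial>\<nu>)))"

lemma cont_EK_fst: "continuous_on UNIV (\<lambda>z::(real^'d) \<times> 'b::topological_space. EK K Q x (fst z))"
  unfolding EK_def by (intro continuous_intros)

lemma cont_EKV_fst: "continuous_on UNIV (\<lambda>z::(real^'d) \<times> 'b::topological_space. EK K Q x (fst z) *\<^sub>R (V *v fst z))"
  unfolding EK_def by (intro continuous_intros)

lemma attn_eq_attn0:
  fixes \<nu> :: "('d::finite) tmeas" and \<theta> :: "('d, 'k::finite, 'e::finite) attn_params"
  assumes s: "sets \<nu> = sets borel" and ae: "AE z in \<nu>. snd z \<in> {0..t}"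
  shows "attn \<theta> \<nu> x t = attn0 \<theta> \<nu> x"
proof -
  have h: "W *v (\<integral>yr. (EK K Q x (fst yr) * indicator {0..t} (snd yr)
               / (\<integral>zs. EK K Q x (fst zs) * indicator {0..t} (snd zs) \<partial>\<nu>)) *\<^sub>R (V *v fst yr) \<partial>\<nu>)
    = W *v ((1 / (\<integral>z. EK K Q x (fst z) \<partial>\<nu>)) *\<^sub>R (\<integral>z. EK K Q x (fst z) *\<^sub>R (V *v fst z) \<partial>\<nu>))"
    for W :: "real^'e^'d" and K Q :: "real^'d^'k" and V :: "real^'d^'e"
  proof -
    have mE: "(\<lambda>z. EK K Q x (fst z)) \<in> borel_measurable \<nu>" by (rule meas_cont[OF s cont_EK_fst])
    have mEV: "(\<lambda>z. EK K Q x (fst z) *\<^sub>R (V *v fst z)) \<in> borel_measurable \<nu>" by (rule meas_cont[OF s cont_EKV_fst])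
    have mI: "(\<lambda>z. indicator {0..t} (snd z) :: real) \<in> borel_measurable \<nu>" by (rule meas_ind[OF s])
    have D: "(\<integral>zs. EK K Q x (fst zs) * indicator {0..t} (snd zs) \<partial>\<nu>) = (\<integral>z. EK K Q x (fst z) \<partial>\<nu>)"
    proof (rule integral_cong_AE)
      show "AE z in \<nu>. EK K Q x (fst z) * indicator {0..t} (snd z) = EK K Q x (fst z)"
        using ae by eventually_elim auto
    qed (use mE mI in auto)
    have N: "(\<integral>yr. (EK K Q x (fst yr) * indicator {0..t} (snd yr) / (\<integral>z. EK K Q x (fst z) \<partial>\<nu>)) *\<^sub>R (V *v fst yr) \<partial>\<nu>)
        = (\<integral>yr. (1 / (\<integral>z. EK K Q x (fst z) \<partial>\<nu>)) *\<^sub>R (EK K Q x (fst yr) *\<^sub>R (V *v fst yr)) \<partial>\<nu>)"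
    proof (rule integral_cong_AE)
      show "AE yr in \<nu>. (EK K Q x (fst yr) * indicator {0..t} (snd yr) / (\<integral>z. EK K Q x (fst z) \<partial>\<nu>)) *\<^sub>R (V *v fst yr)
          = (1 / (\<integral>z. EK K Q x (fst z) \<partial>\<nu>)) *\<^sub>R (EK K Q x (fst yr) *\<^sub>R (V *v fst yr))"
        using ae by eventually_elim auto
    next
      have mV: "(\<lambda>z. V *v fst z) \<in> borel_measurable \<nu>" by (rule meas_cont[OF s]) (intro continuous_intros)
      show "(\<lambda>yr. (EK K Q x (fst yr) * indicator {0..t} (snd yr) / (\<integral>z. EK K Q x (fst z) \<partial>\<nu>)) *\<^sub>R (V *v fst yr)) \<in> borel_measurable \<nu>"
        by (rule borel_measurable_scaleR[OF borel_measurable_divide[OF borel_measurable_times[OF mE mI] borel_measurable_const] mV])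
      show "(\<lambda>yr. (1 / (\<integral>z. EK K Q x (fst z) \<partial>\<nu>)) *\<^sub>R (EK K Q x (fst yr) *\<^sub>R (V *v fst yr))) \<in> borel_measurable \<nu>"
        by (rule borel_measurable_scaleR[OF borel_measurable_const mEV])
    qed
    also have "\<dots> = (1 / (\<integral>z. EK K Q x (fst z) \<partial>\<nu>)) *\<^sub>R (\<integral>z. EK K Q x (fst z) *\<^sub>R (V *v fst z) \<partial>\<nu>)"
      by (rule integral_scaleR_right)
    finally show ?thesis by (simp only: D)
  qed
  show ?thesis
    unfolding attn_def attn0_def EK_def[symmetric]
    by (intro arg_cong[where f="(+) x"] arg_cong[where f=sum_list] map_cong refl) (auto simp: h split: prod.split)
qed

lemma attn_masked:
  fixes \<mu> :: "('d::finite) tmeas" and \<theta> :: "('d, 'k::finite, 'e::finite) attn_params"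
  assumes s: "sets \<mu> = sets borel" and m: "measure (tmarg \<mu>) {0..t} > 0"
  shows "attn \<theta> \<mu> x t = attn \<theta> (masked \<mu> t) x t"
proof -
  define m where "m = measure (tmarg \<mu>) {0..t}"
  have mpos: "m > 0" using m m_def by simp
  define g where "g z = indicator {0..t} (snd z) / m" for z :: "(real^'d) \<times> real"
  have mI: "(\<lambda>z. indicator {0..t} (snd z) :: real) \<in> borel_measurable \<mu>" by (rule meas_ind[OF s])
  have mg: "g \<in> borel_measurable \<mu>" unfolding g_def using mI by (intro borel_measurable_divide) auto
  have gnn: "AE z in \<mu>. 0 \<le> g z" using mpos by (auto simp: g_def)
  have msk: "masked \<mu> t = density \<mu> (\<lambda>z. ennreal (g z))" unfolding masked_def g_def m_def ..
  have h: "W *v (\<integral>yr. (EK K Q x (fst yr) * indicator {0..t} (snd yr)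
               / (\<integral>zs. EK K Q x (fst zs) * indicator {0..t} (snd zs) \<partial>\<mu>)) *\<^sub>R (V *v fst yr) \<partial>\<mu>)
    = W *v (\<integral>yr. (EK K Q x (fst yr) * indicator {0..t} (snd yr)
               / (\<integral>zs. EK K Q x (fst zs) * indicator {0..t} (snd zs) \<partial>masked \<mu> t)) *\<^sub>R (V *v fst yr) \<partial>masked \<mu> t)"
    for W :: "real^'e^'d" and K Q :: "real^'d^'k" and V :: "real^'d^'e"
  proof -
    have mE: "(\<lambda>z. EK K Q x (fst z)) \<in> borel_measurable \<mu>" by (rule meas_cont[OF s cont_EK_fst])
    have mV: "(\<lambda>z. V *v fst z) \<in> borel_measurable \<mu>" by (rule meas_cont[OF s]) (intro continuous_intros)
    define D where "D = (\<integral>zs. EK K Q x (fst zs) * indicator {0..t} (snd zs) \<partial>\<mu>)"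
    have D: "(\<integral>zs. EK K Q x (fst zs) * indicator {0..t} (snd zs) \<partial>masked \<mu> t) = D / m"
    proof -
      have "(\<integral>zs. EK K Q x (fst zs) * indicator {0..t} (snd zs) \<partial>masked \<mu> t)
          = (\<integral>zs. g zs *\<^sub>R (EK K Q x (fst zs) * indicator {0..t} (snd zs)) \<partial>\<mu>)"
        unfolding msk using mE mI mg gnn by (intro integral_density borel_measurable_times) auto
      also have "\<dots> = (\<integral>zs. (1/m) * (EK K Q x (fst zs) * indicator {0..t} (snd zs)) \<partial>\<mu>)"
        by (rule Bochner_Integration.integral_cong[OF refl]) (auto simp: g_def indicator_def)
      finally show ?thesis by (simp add: D_def)
    qed
    have "(\<integral>yr. (EK K Q x (fst yr) * indicator {0..t} (snd yr) / (D / m)) *\<^sub>R (V *v fst yr) \<partial>masked \<mu> t)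
      = (\<integral>yr. g yr *\<^sub>R ((EK K Q x (fst yr) * indicator {0..t} (snd yr) / (D / m)) *\<^sub>R (V *v fst yr)) \<partial>\<mu>)"
      unfolding msk using mE mI mg gnn mV
      by (intro integral_density borel_measurable_times borel_measurable_scaleR borel_measurable_divide) auto
    also have "\<dots> = (\<integral>yr. (EK K Q x (fst yr) * indicator {0..t} (snd yr) / D) *\<^sub>R (V *v fst yr) \<partial>\<mu>)"
      by (rule Bochner_Integration.integral_cong[OF refl]) (use mpos in \<open>auto simp: g_def indicator_def divide_divide_eq_right\<close>)
    finally show ?thesis using D by (simp add: D_def)
  qed
  show ?thesis
    unfolding attn_def EK_def[symmetric]
    by (intro arg_cong[where f="(+) x"] arg_cong[where f=sum_list] map_cong refl) (auto simp: h split: prod.split)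
qed

definition goodS :: "(real^'d) set \<Rightarrow> (('d::finite) tmeas \<times> (real^'d)) set \<Rightarrow> bool" where
  "goodS \<Omega> S \<longleftrightarrow> (\<forall>q\<in>S. prob_space (fst q) \<and> sets (fst q) = sets borel \<and> (AE z in fst q. fst z \<in> \<Omega>) \<and> snd q \<in> \<Omega>)"

lemma prob_int_bound:
  fixes f :: "'a \<Rightarrow> real"
  assumes "prob_space \<nu>" "integrable \<nu> f" "AE z in \<nu>. \<bar>f z\<bar> \<le> B"
  shows "\<bar>integral\<^sup>L \<nu> f\<bar> \<le> B"
proof -
  have "integral\<^sup>L \<nu> f \<le> B"
    using assms(3) by (intro prob_space.integral_le_const[OF assms(1,2)]) (auto elim: eventually_mono)
  moreover have "- B \<le> integral\<^sup>L \<nu> f"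
    using assms(3) by (intro prob_space.integral_ge_const[OF assms(1,2)]) (auto elim: eventually_mono)
  ultimately show ?thesis by linarith
qed

lemma integrable_cont:
  fixes \<nu> :: "('d::finite) tmeas" and f :: "real^'d \<Rightarrow> 'b::{banach, second_countable_topology}"
  assumes K: "compact \<Omega>" and p: "prob_space \<nu>" and s: "sets \<nu> = sets borel"
    and ae: "AE z in \<nu>. fst z \<in> \<Omega>" and f: "continuous_on UNIV f"
  shows "integrable \<nu> (\<lambda>z. f (fst z))"
proof -
  have "compact (f ` \<Omega>)" by (rule compact_continuous_image[OF continuous_on_subset[OF f] K]) auto
  then obtain B where B: "\<forall>y\<in>\<Omega>. norm (f y) \<le> B" using compact_imp_bounded bounded_iff by (metis imageI)
  have c: "continuous_on UNIV (\<lambda>z::(real^'d)\<times>real. f (fst z))"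
    by (rule continuous_on_compose2[OF f continuous_on_fst]) auto
  show ?thesis
  proof (rule finite_measure.integrable_const_bound)
    show "finite_measure \<nu>" using p by (rule prob_space.finite_measure)
    show "AE x in \<nu>. norm (f (fst x)) \<le> B" using ae B by (auto elim: eventually_mono)
    show "(\<lambda>z. f (fst z)) \<in> borel_measurable \<nu>" by (rule meas_cont[OF s c])
  qed
qed

lemma ev_in: "eventually (\<lambda>q. q \<in> S) (atin (subtopology X S) p)"
  unfolding eventually_atin
  by (metis Diff_subset Int_iff openin_topspace subsetD topspace_subtopology)

lemma weak_star_open:
  assumes "continuous_on UNIV f" "bounded (range f)" "open (U::real set)"
  shows "openin weak_star {\<mu>. (\<integral>z. f z \<partial>\<mu>) \<in> U}"
  unfolding weak_star_def openin_topology_generated_by_iff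
  by (rule generate_topology_on.Basis) (use assms in blast)

lemma key_real:
  fixes g :: "(real^'d) \<times> (real^'d) \<Rightarrow> real" and S :: "(('d::finite) tmeas \<times> (real^'d)) set"
  assumes K: "compact \<Omega>" and gc: "continuous_on UNIV g" and G: "goodS \<Omega> S" and pS: "p \<in> S"
  shows "((\<lambda>q. \<integral>z. g (snd q, fst z) \<partial>fst q) \<longlongrightarrow> (\<integral>z. g (snd p, fst z) \<partial>fst p))
           (atin (subtopology (prod_topology weak_star euclidean) S) p)"
proof (rule tendstoI)
  fix \<epsilon> :: real assume \<epsilon>: "\<epsilon> > 0"
  obtain \<nu>0 x0 where p: "p = (\<nu>0, x0)" by (cases p)
  have p0: "prob_space \<nu>0" "sets \<nu>0 = sets borel" "AE z in \<nu>0. fst z \<in> \<Omega>" "x0 \<in> \<Omega>"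
  proof -
    have "prob_space (fst p) \<and> sets (fst p) = sets borel \<and> (AE z in fst p. fst z \<in> \<Omega>) \<and> snd p \<in> \<Omega>"
      using G pS unfolding goodS_def by blast
    then show "prob_space \<nu>0" "sets \<nu>0 = sets borel" "AE z in \<nu>0. fst z \<in> \<Omega>" "x0 \<in> \<Omega>" unfolding p fst_conv snd_conv by auto
  qed
  have KK: "compact (\<Omega> \<times> \<Omega>)" by (rule compact_Times[OF K K])
  have "uniformly_continuous_on (\<Omega> \<times> \<Omega>) g"
    by (rule compact_uniformly_continuous[OF continuous_on_subset[OF gc] KK]) auto
  then obtain \<delta> where \<delta>: "\<delta> > 0" and uc: "\<And>a b. a \<in> \<Omega> \<times> \<Omega> \<Longrightarrow> b \<in> \<Omega> \<times> \<Omega> \<Longrightarrow> dist b a < \<delta> \<Longrightarrow> dist (g b) (g a) < \<epsilon>/2"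
    unfolding uniformly_continuous_on_def using \<epsilon> by (metis half_gt_zero)
  have "compact (g ` (\<Omega> \<times> \<Omega>))" by (rule compact_continuous_image[OF continuous_on_subset[OF gc] KK]) auto
  then obtain M where M: "M > 0" "\<And>w. w \<in> \<Omega> \<times> \<Omega> \<Longrightarrow> \<bar>g w\<bar> \<le> M"
    using compact_imp_bounded bounded_pos by (metis imageI real_norm_def)
  define h where "h z = max (- M) (min M (g (x0, fst z)))" for z :: "(real^'d) \<times> real"
  have cg0: "continuous_on UNIV (\<lambda>z::(real^'d)\<times>real. g (x0, fst z))"
    by (rule continuous_on_compose2[OF gc]) (auto intro!: continuous_intros)
  have hc: "continuous_on UNIV h" unfolding h_def by (intro continuous_intros cg0)
  have hb: "bounded (range h)" unfolding bounded_iff h_def using M(1) by (intro exI[of _ M]) auto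
  have hg: "h z = g (x0, fst z)" if "fst z \<in> \<Omega>" for z
    using M(2)[of "(x0, fst z)"] that p0(4) unfolding h_def by auto
  have hint: "(\<integral>z. h z \<partial>\<nu>) = (\<integral>z. g (x0, fst z) \<partial>\<nu>)" if "sets \<nu> = sets borel" "AE z in \<nu>. fst z \<in> \<Omega>" for \<nu> :: "('d::finite) tmeas"
    by (rule integral_cong_AE) (use that hg meas_cont[OF that(1) hc] meas_cont[OF that(1) cg0] in \<open>auto elim: eventually_mono\<close>)
  define c where "c = (\<integral>z. h z \<partial>\<nu>0)"
  define A where "A = {\<mu>::('d::finite) tmeas. (\<integral>z. h z \<partial>\<mu>) \<in> ball c (\<epsilon>/2)}"
  define U where "U = S \<inter> (A \<times> ball x0 \<delta>)"
  have "openin weak_star A" unfolding A_def by (rule weak_star_open[OF hc hb]) auto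
  then have "openin (prod_topology weak_star euclidean) (A \<times> ball x0 \<delta>)"
    by (simp add: openin_prod_Times_iff)
  then have Uo: "openin (subtopology (prod_topology weak_star euclidean) S) U"
    unfolding U_def by (rule openin_subtopology_Int2)
  have pU: "p \<in> U" unfolding U_def A_def c_def using pS p \<delta> \<epsilon> by auto
  have "\<forall>q\<in>U - {p}. dist (\<integral>z. g (snd q, fst z) \<partial>fst q) (\<integral>z. g (snd p, fst z) \<partial>fst p) < \<epsilon>"
  proof
    fix q assume "q \<in> U - {p}"
    then obtain \<nu> x where q: "q = (\<nu>, x)" "q \<in> S" "\<nu> \<in> A" "x \<in> ball x0 \<delta>" unfolding U_def by (cases q) auto
    have q0: "prob_space \<nu>" "sets \<nu> = sets borel" "AE z in \<nu>. fst z \<in> \<Omega>" "x \<in> \<Omega>"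
    proof -
      have "prob_space (fst q) \<and> sets (fst q) = sets borel \<and> (AE z in fst q. fst z \<in> \<Omega>) \<and> snd q \<in> \<Omega>"
        using G q(2) unfolding goodS_def by blast
      then show "prob_space \<nu>" "sets \<nu> = sets borel" "AE z in \<nu>. fst z \<in> \<Omega>" "x \<in> \<Omega>" unfolding q(1) fst_conv snd_conv by auto
    qed
    have i1: "integrable \<nu> (\<lambda>z. g (x, fst z))"
      by (rule integrable_cont[OF K q0(1-3), of "\<lambda>y. g (x, y)"]) (rule continuous_on_compose2[OF gc], auto intro!: continuous_intros)
    have i2: "integrable \<nu> (\<lambda>z. g (x0, fst z))"
      by (rule integrable_cont[OF K q0(1-3), of "\<lambda>y. g (x0, y)"]) (rule continuous_on_compose2[OF gc], auto intro!: continuous_intros)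
    have "\<bar>(\<integral>z. g (x, fst z) - g (x0, fst z) \<partial>\<nu>)\<bar> \<le> \<epsilon>/2"
    proof (rule prob_int_bound[OF q0(1)])
      show "integrable \<nu> (\<lambda>z. g (x, fst z) - g (x0, fst z))" using i1 i2 by auto
      show "AE z in \<nu>. \<bar>g (x, fst z) - g (x0, fst z)\<bar> \<le> \<epsilon> / 2"
        using q0(3)
      proof eventually_elim
        case (elim z)
        have "dist (x, fst z) (x0, fst z) = dist x x0" by (simp add: dist_Pair_Pair)
        also have "\<dots> < \<delta>" using q(4) by (simp add: dist_commute)
        finally have "dist (g (x, fst z)) (g (x0, fst z)) < \<epsilon>/2"
          using uc[of "(x0, fst z)" "(x, fst z)"] elim p0(4) q0(4) by auto
        then show ?case by (simp add: dist_real_def)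
      qed
    qed
    then have b1: "\<bar>(\<integral>z. g (x, fst z) \<partial>\<nu>) - (\<integral>z. g (x0, fst z) \<partial>\<nu>)\<bar> \<le> \<epsilon>/2"
      using i1 i2 by simp
    have b2: "\<bar>(\<integral>z. g (x0, fst z) \<partial>\<nu>) - (\<integral>z. g (x0, fst z) \<partial>\<nu>0)\<bar> < \<epsilon>/2"
      using q(3) hint[OF q0(2,3)] hint[OF p0(2,3)] unfolding A_def c_def by (simp add: dist_real_def abs_minus_commute)
    show "dist (\<integral>z. g (snd q, fst z) \<partial>fst q) (\<integral>z. g (snd p, fst z) \<partial>fst p) < \<epsilon>"
    proof -
      have tri: "\<And>a b c::real. \<bar>a - b\<bar> \<le> \<epsilon>/2 \<Longrightarrow> \<bar>b - c\<bar> < \<epsilon>/2 \<Longrightarrow> \<bar>a - c\<bar> < \<epsilon>" by arith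
      show ?thesis using tri[OF b1 b2] q(1) p by (simp add: dist_real_def)
    qed
  qed
  then show "\<forall>\<^sub>F q in atin (subtopology (prod_topology weak_star euclidean) S) p.
      dist (\<integral>z. g (snd q, fst z) \<partial>fst q) (\<integral>z. g (snd p, fst z) \<partial>fst p) < \<epsilon>"
    unfolding eventually_atin using Uo pU by blast
qed

lemma key_vec:
  fixes g :: "(real^'d) \<times> (real^'d) \<Rightarrow> real^'n" and S :: "(('d::finite) tmeas \<times> (real^'d)) set"
  assumes K: "compact \<Omega>" and gc: "continuous_on UNIV g" and G: "goodS \<Omega> S" and pS: "p \<in> S"
  shows "((\<lambda>q. \<integral>z. g (snd q, fst z) \<partial>fst q) \<longlongrightarrow> (\<integral>z. g (snd p, fst z) \<partial>fst p))
           (atin (subtopology (prod_topology weak_star euclidean) S) p)"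
proof (rule vec_tendstoI)
  fix i
  have comp: "(\<integral>z. g (snd q, fst z) \<partial>fst q) $ i = (\<integral>z. g (snd q, fst z) $ i \<partial>fst q)" if "q \<in> S" for q
  proof -
    have "prob_space (fst q) \<and> sets (fst q) = sets borel \<and> (AE z in fst q. fst z \<in> \<Omega>) \<and> snd q \<in> \<Omega>"
      using G that unfolding goodS_def by blast
    then have "integrable (fst q) (\<lambda>z. g (snd q, fst z))"
      by (intro integrable_cont[OF K, of "fst q" "\<lambda>y. g (snd q, y)"])
         (auto intro!: continuous_on_compose2[OF gc] continuous_intros)
    then show ?thesis using integral_bounded_linear[OF bounded_linear_vec_nth] by metis
  qed
  have gi: "continuous_on UNIV (\<lambda>w. g w $ i)"
    by (rule continuous_on_compose2[OF linear_continuous_on[OF bounded_linear_vec_nth] gc]) auto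
  have "((\<lambda>q. \<integral>z. g (snd q, fst z) $ i \<partial>fst q) \<longlongrightarrow> (\<integral>z. g (snd p, fst z) $ i \<partial>fst p))
           (atin (subtopology (prod_topology weak_star euclidean) S) p)"
    using key_real[OF K gi G pS] by simp
  moreover have "\<forall>\<^sub>F q in atin (subtopology (prod_topology weak_star euclidean) S) p.
      (\<integral>z. g (snd q, fst z) \<partial>fst q) $ i = (\<integral>z. g (snd q, fst z) $ i \<partial>fst q)"
    using ev_in by (rule eventually_mono) (rule comp)
  ultimately show "((\<lambda>q. (\<integral>z. g (snd q, fst z) \<partial>fst q) $ i) \<longlongrightarrow> (\<integral>z. g (snd p, fst z) \<partial>fst p) $ i)
           (atin (subtopology (prod_topology weak_star euclidean) S) p)"
    using comp[OF pS] by (simp add: tendsto_cong)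
qed

definition hterm :: "((real^'e^'d) \<times> (real^'d^'k) \<times> (real^'d^'k) \<times> (real^'d^'e)) \<Rightarrow> ('d::finite) tmeas \<Rightarrow> real^'d \<Rightarrow> real^'d" where
  "hterm a \<nu> x = (case a of (W, K, Q, V) \<Rightarrow>
      W *v ((1 / (\<integral>z. EK K Q x (fst z) \<partial>\<nu>)) *\<^sub>R (\<integral>z. EK K Q x (fst z) *\<^sub>R (V *v fst z) \<partial>\<nu>)))"

lemma attn0_alt: "attn0 \<theta> \<nu> x = x + (\<Sum>a\<leftarrow>\<theta>. hterm a \<nu> x)"
  unfolding attn0_def hterm_def by (intro arg_cong[where f="(+) x"] arg_cong[where f=sum_list] map_cong refl)

lemma tendsto_sum_list:
  fixes f :: "'q \<Rightarrow> 'a \<Rightarrow> 'b::real_normed_vector"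
  assumes "\<And>a. a \<in> set xs \<Longrightarrow> ((\<lambda>q. f q a) \<longlongrightarrow> f0 a) F"
  shows "((\<lambda>q. \<Sum>a\<leftarrow>xs. f q a) \<longlongrightarrow> (\<Sum>a\<leftarrow>xs. f0 a)) F"
  using assms by (induction xs) (auto intro!: tendsto_add)

lemma EK_pos: "EK K Q x y > 0" by (simp add: EK_def)

lemma hterm_tendsto:
  fixes S :: "(('d::finite) tmeas \<times> (real^'d)) set"
    and a :: "(real^'e^'d) \<times> (real^'d^'k::finite) \<times> (real^'d^'k) \<times> (real^'d^'e::finite)"
  assumes K: "compact \<Omega>" and G: "goodS \<Omega> S" and pS: "p \<in> S"
  shows "((\<lambda>q. hterm a (fst q) (snd q)) \<longlongrightarrow> hterm a (fst p) (snd p))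
           (atin (subtopology (prod_topology weak_star euclidean) S) p)"
proof -
  obtain W K Q V where a: "a = (W, K, Q, V)" by (cases a) auto
  have p0: "prob_space (fst p) \<and> sets (fst p) = sets borel \<and> (AE z in fst p. fst z \<in> \<Omega>) \<and> snd p \<in> \<Omega>"
    using G pS unfolding goodS_def by blast
  have cD: "continuous_on UNIV (\<lambda>w::(real^'d) \<times> (real^'d). EK K Q (fst w) (snd w))" by (rule cont_EK)
  have cN: "continuous_on UNIV (\<lambda>w::(real^'d) \<times> (real^'d). EK K Q (fst w) (snd w) *\<^sub>R (V *v snd w))"
    unfolding EK_def by (intro continuous_intros)
  have D: "((\<lambda>q. \<integral>z. EK K Q (snd q) (fst z) \<partial>fst q) \<longlongrightarrow> (\<integral>z. EK K Q (snd p) (fst z) \<partial>fst p))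
           (atin (subtopology (prod_topology weak_star euclidean) S) p)"
    using key_real[OF K cD G pS] by simp
  have N: "((\<lambda>q. \<integral>z. EK K Q (snd q) (fst z) *\<^sub>R (V *v fst z) \<partial>fst q) \<longlongrightarrow> (\<integral>z. EK K Q (snd p) (fst z) *\<^sub>R (V *v fst z) \<partial>fst p))
           (atin (subtopology (prod_topology weak_star euclidean) S) p)"
    using key_vec[OF K cN G pS] by simp
  have D0: "(\<integral>z. EK K Q (snd p) (fst z) \<partial>fst p) \<noteq> 0"
  proof
    assume "(\<integral>z. EK K Q (snd p) (fst z) \<partial>fst p) = 0"
    moreover have "integrable (fst p) (\<lambda>z. EK K Q (snd p) (fst z))"
      using p0 by (intro integrable_cont[OF K, of "fst p" "\<lambda>y. EK K Q (snd p) y"])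
        (auto simp: EK_def intro!: continuous_intros)
    moreover have "AE z in fst p. 0 \<le> EK K Q (snd p) (fst z)" by (simp add: less_imp_le EK_pos)
    ultimately have "AE z in fst p. EK K Q (snd p) (fst z) = 0"
      using integral_nonneg_eq_0_iff_AE[of "fst p" "\<lambda>z. EK K Q (snd p) (fst z)"] by blast
    then have "AE z in fst p. False" by eventually_elim (metis EK_pos less_irrefl)
    then show False using prob_space.AE_False p0 by blast
  qed
  show ?thesis unfolding a hterm_def prod.case
    by (intro bounded_linear.tendsto[OF matrix_vector_mul_bounded_linear] tendsto_scaleR tendsto_divide tendsto_const D N D0)
qed

lemma attn0_tendsto:
  fixes S :: "(('d::finite) tmeas \<times> (real^'d)) set"
    and \<theta> :: "('d, 'k::finite, 'e::finite) attn_params"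
  assumes K: "compact \<Omega>" and G: "goodS \<Omega> S" and pS: "p \<in> S"
  shows "((\<lambda>q. attn0 \<theta> (fst q) (snd q)) \<longlongrightarrow> attn0 \<theta> (fst p) (snd p))
           (atin (subtopology (prod_topology weak_star euclidean) S) p)"
proof -
  have c1: "continuous_on UNIV (\<lambda>w::(real^'d) \<times> (real^'d). fst w)" by (intro continuous_intros)
  have x: "((\<lambda>q. \<integral>z. snd q \<partial>fst q) \<longlongrightarrow> (\<integral>z. snd p \<partial>fst p))
           (atin (subtopology (prod_topology weak_star euclidean) S) p)"
    using key_vec[OF K c1 G pS] by simp
  have int1: "(\<integral>z. snd q \<partial>fst q) = snd q" if "q \<in> S" for q
  proof -
    have "prob_space (fst q)" using G that unfolding goodS_def by blast
    then show ?thesis by (simp add: prob_space.prob_space)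
  qed
  have x': "((\<lambda>q. snd q) \<longlongrightarrow> snd p) (atin (subtopology (prod_topology weak_star euclidean) S) p)"
  proof -
    have "\<forall>\<^sub>F q in atin (subtopology (prod_topology weak_star euclidean) S) p. (\<integral>z. snd q \<partial>fst q) = snd q"
      using ev_in by (rule eventually_mono) (rule int1)
    then show ?thesis using x int1[OF pS] by (simp add: tendsto_cong)
  qed
  show ?thesis unfolding attn0_alt
    by (intro tendsto_add x' tendsto_sum_list hterm_tendsto[OF K G pS])
qed

lemma LipC_facts:
  fixes \<mu> :: "('d::finite) tmeas"
  assumes "\<mu> \<in> LipC \<Omega> C \<sigma>" "\<sigma> > 0" "t \<in> {0..1}"
  shows "prob_space \<mu>" "sets \<mu> = sets borel" "AE z in \<mu>. z \<in> \<Omega> \<times> {0..1}" "measure (tmarg \<mu>) {0..t} > 0"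
proof -
  have P: "\<mu> \<in> Pmeas \<Omega>" and m0: "measure (tmarg \<mu>) {0} \<ge> \<sigma>" using assms(1) by (auto simp: LipC_def)
  show p: "prob_space \<mu>" and s: "sets \<mu> = sets borel" and "AE z in \<mu>. z \<in> \<Omega> \<times> {0..1}" using Pmeas_facts[OF P] by auto
  have "measure (tmarg \<mu>) {0} \<le> measure (tmarg \<mu>) {0..t}"
    using tmarg_facts[OF p s] assms(3)
    by (intro finite_measure.finite_measure_mono prob_space.finite_measure) auto
  then show "measure (tmarg \<mu>) {0..t} > 0" using m0 assms(2) by linarith
qed

lemma masked_LipC:
  fixes \<mu> :: "('d::finite) tmeas"
  assumes "\<mu> \<in> LipC \<Omega> C \<sigma>" "\<sigma> > 0" "t \<in> {0..1}"
  shows "prob_space (masked \<mu> t)" "sets (masked \<mu> t) = sets borel"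
    "AE z in masked \<mu> t. fst z \<in> \<Omega> \<and> snd z \<in> {0..t}"
proof -
  note L = LipC_facts[OF assms]
  show "prob_space (masked \<mu> t)" "sets (masked \<mu> t) = sets borel" using masked_facts[OF L] by auto
  show "AE z in masked \<mu> t. fst z \<in> \<Omega> \<and> snd z \<in> {0..t}"
    using masked_facts(3)[OF L] by (auto elim: eventually_mono)
qed

lemma Xset_props:
  fixes \<theta> :: "('d::finite, 'k::finite, 'e::finite) attn_params"
  assumes "\<sigma> > 0"
  shows "goodS \<Omega> (Xset \<Omega> C \<sigma>)"
    and "q \<in> Xset \<Omega> C \<sigma> \<Longrightarrow> reduced (attn \<theta>) (fst q) (snd q) = attn0 \<theta> (fst q) (snd q)"
proof -
  have *: "prob_space (fst q) \<and> sets (fst q) = sets borel \<and> (AE z in fst q. fst z \<in> \<Omega>) \<and> snd q \<in> \<Omega>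
      \<and> reduced (attn \<theta>) (fst q) (snd q) = attn0 \<theta> (fst q) (snd q)" if qX: "q \<in> Xset \<Omega> C \<sigma>" for q
  proof -
    obtain \<mu> x t where q: "q = (masked \<mu> t, x)" "\<mu> \<in> LipC \<Omega> C \<sigma>" "x \<in> \<Omega>" "t \<in> {0..1}"
      using qX unfolding Xset_def by blast
    note M = masked_LipC[OF q(2) assms q(4)]
    have ae: "AE z in masked \<mu> t. snd z \<in> {0..t}" using M(3) by (auto elim: eventually_mono)
    have "reduced (attn \<theta>) (masked \<mu> t) x = attn0 \<theta> (masked \<mu> t) x"
      unfolding reduced_def by (rule attn_eq_attn0[OF M(2) endtime_AE[OF M(1,2) ae]])
    then show ?thesis unfolding q(1) fst_conv snd_conv using M q(3) by (auto elim: eventually_mono)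
  qed
  show "goodS \<Omega> (Xset \<Omega> C \<sigma>)" unfolding goodS_def using * by blast
  show "q \<in> Xset \<Omega> C \<sigma> \<Longrightarrow> reduced (attn \<theta>) (fst q) (snd q) = attn0 \<theta> (fst q) (snd q)" using * by blast
qed

theorem lemmaC2:
  fixes \<Omega> :: "(real^'d) set" and C \<sigma> :: real
    and \<theta> :: "('d, 'k::finite, 'e::finite) attn_params"
  assumes "compact \<Omega>" and "C > 0" and "0 < \<sigma>" and "\<sigma> < 1"
  shows "(causal \<Omega> C \<sigma> (attn \<theta>) \<and> identifiable \<Omega> C \<sigma> (attn \<theta>)) \<and>
         (\<forall>\<mu>\<in>LipC \<Omega> C \<sigma>. \<forall>x\<in>\<Omega>. \<forall>t\<in>{0..1}.
            attn \<theta> \<mu> x t = reduced (attn \<theta>) (masked \<mu> t) x) \<and>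
         continuous_map (subtopology (prod_topology weak_star euclidean) (Xset \<Omega> C \<sigma>)) euclidean
           (\<lambda>(\<nu>, x). reduced (attn \<theta>) \<nu> x)"
proof (intro conjI)
  note K = assms(1) and sg = assms(3)
  have caus: "attn \<theta> \<mu> x t = attn \<theta> (masked \<mu> t) x t" if "\<mu> \<in> LipC \<Omega> C \<sigma>" "t \<in> {0..1}" for \<mu> x t
    using LipC_facts[OF that(1) sg that(2)] by (intro attn_masked) auto
  show "causal \<Omega> C \<sigma> (attn \<theta>)" unfolding causal_def using caus by blast
  show "identifiable \<Omega> C \<sigma> (attn \<theta>)" unfolding identifiable_def
  proof (intro ballI impI)
    fix \<mu> and t t' :: real and x assume \<mu>: "\<mu> \<in> LipC \<Omega> C \<sigma>" and t: "t \<in> {0..1}" and t': "t' \<in> {0..1}"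
      and eq: "masked \<mu> t = masked \<mu> t'"
    note M = masked_LipC[OF \<mu> sg t] and M' = masked_LipC[OF \<mu> sg t']
    have "attn \<theta> (masked \<mu> t) x t = attn0 \<theta> (masked \<mu> t) x"
      using M(3) by (intro attn_eq_attn0[OF M(2)]) (auto elim: eventually_mono)
    also have "\<dots> = attn0 \<theta> (masked \<mu> t') x" by (simp add: eq)
    also have "\<dots> = attn \<theta> (masked \<mu> t') x t'"
      using M'(3) by (intro attn_eq_attn0[OF M'(2), symmetric]) (auto elim: eventually_mono)
    finally show "attn \<theta> (masked \<mu> t) x t = attn \<theta> (masked \<mu> t') x t'" .
  qed
  show "\<forall>\<mu>\<in>LipC \<Omega> C \<sigma>. \<forall>x\<in>\<Omega>. \<forall>t\<in>{0..1}. attn \<theta> \<mu> x t = reduced (attn \<theta>) (masked \<mu> t) x"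
  proof (intro ballI)
    fix \<mu> x and t :: real assume \<mu>: "\<mu> \<in> LipC \<Omega> C \<sigma>" and "x \<in> \<Omega>" and t: "t \<in> {0..1}"
    note M = masked_LipC[OF \<mu> sg t]
    have ae: "AE z in masked \<mu> t. snd z \<in> {0..t}" using M(3) by (auto elim: eventually_mono)
    have "attn \<theta> \<mu> x t = attn \<theta> (masked \<mu> t) x t" by (rule caus[OF \<mu> t])
    also have "\<dots> = attn0 \<theta> (masked \<mu> t) x" by (rule attn_eq_attn0[OF M(2) ae])
    also have "\<dots> = attn \<theta> (masked \<mu> t) x (endtime (masked \<mu> t))"
      by (rule attn_eq_attn0[OF M(2) endtime_AE[OF M(1,2) ae], symmetric])
    finally show "attn \<theta> \<mu> x t = reduced (attn \<theta>) (masked \<mu> t) x" by (simp add: reduced_def)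
  qed
  show "continuous_map (subtopology (prod_topology weak_star euclidean) (Xset \<Omega> C \<sigma>)) euclidean
           (\<lambda>(\<nu>, x). reduced (attn \<theta>) \<nu> x)"
    unfolding continuous_map_atin limitin_canonical_iff
  proof
    fix p assume "p \<in> topspace (subtopology (prod_topology weak_star euclidean) (Xset \<Omega> C \<sigma>))"
    then have pS: "p \<in> Xset \<Omega> C \<sigma>" by simp
    note G = Xset_props(1)[OF sg, of \<Omega> C]
    have "\<forall>\<^sub>F q in atin (subtopology (prod_topology weak_star euclidean) (Xset \<Omega> C \<sigma>)) p.
        attn0 \<theta> (fst q) (snd q) = (\<lambda>(\<nu>, x). reduced (attn \<theta>) \<nu> x) q"
      using ev_in by (rule eventually_mono) (simp add: split_beta Xset_props(2)[OF sg])
    moreover have "(\<lambda>(\<nu>, x). reduced (attn \<theta>) \<nu> x) p = attn0 \<theta> (fst p) (snd p)"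
      using pS by (simp add: split_beta Xset_props(2)[OF sg])
    ultimately show "((\<lambda>(\<nu>, x). reduced (attn \<theta>) \<nu> x) \<longlongrightarrow> (\<lambda>(\<nu>, x). reduced (attn \<theta>) \<nu> x) p)
        (atin (subtopology (prod_topology weak_star euclidean) (Xset \<Omega> C \<sigma>)) p)"
      using attn0_tendsto[OF K G pS, of \<theta>] by (simp add: tendsto_cong)
  qed
qed

end
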